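(* The functors $\varepsilon_C:Sd(C)\to C$ are natural in $C$: for every functor $f:C\to D$ between small categories, $f\circ\varepsilon_C=\varepsilon_D\circ Sd(f)$. Hence they form a natural transformation $\varepsilon:Sd\Rightarrow\mathrm{id}_{\mathcal{Cat}}$.
   Context: For a small category $C$: a $q$-simplex of the nerve $NC$ is a functor $X:[q]\to C$ ($[q]=\{0<\dots<q\}$), i.e. a chain of arrows $f_i:X_{i-1}\to X_i$; $q_X=q$; for $i\le j$, $X(i\to j)$ denotes the composite $X_i\to X_j$. $X$ is non-degenerate if no $f_i$ is an identity. $\Delta/C$ has all simplices as objects and as morphisms $X\to Y$ the order-preserving $\xi:[q_X]\to[q_Y]$ with $Y\circ\xi=X$, written $\xi_*$. For a $q$-simplex $X$ and surjective order-preserving $s:[q+1]\to[q]$ with order-preserving right inverses $d,d'$, $d_*,d'_*:X\to X\circ s$ are elementary equivalent; $\sim$ is the smallest equivalence relation on morphisms of $\Delta/C$ compatible with composition containing these pairs; $[\Delta/C]$ is the quotient category; $Sd(C)$ is its full subcategory on the non-degenerate simplices. $\varepsilon_C:Sd(C)\to C$ sends $X$ to $X_{q_X}$ and $[\xi_*]:X\to Y$ to $Y(\xi(q_X)\to q_Y)$. For a simplex $X=(f_1,\dots,f_q)$, $r(X)$ is the non-degenerate simplex obtained by deleting identity arrows, of dimension $p_X$, and $\alpha_X:[q_X]\to[p_X]$ is the surjective order-preserving map with $\alpha_X(i-1)=\alpha_X(i)$ iff $f_i$ is an identity, so $X=r(X)\circ\alpha_X$. For a functor $f:C\to D$, the functor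 $Sd(f):Sd(C)\to Sd(D)$ sends $X$ to $r(f\circ X)$ and $[\xi_*]:X\to Y$ to $[(\alpha_{f\circ Y}\circ\xi\circ\sigma)_*]$, where $\sigma$ is any order-preserving right inverse of $\alpha_{f\circ X}$. *)

theory Defs
  imports Main "HOL-Library.FuncSet"
begin

record ('o,'a) cat =
  Obj  :: "'o set"
  Arr  :: "'a set"
  Dom  :: "'a \<Rightarrow> 'o"
  Cod  :: "'a \<Rightarrow> 'o"
  Id   :: "'o \<Rightarrow> 'a"
  Comp :: "'a \<Rightarrow> 'a \<Rightarrow> 'a"   (* Comp C g f = g \<circ> f *)

definition category :: "('o,'a) cat \<Rightarrow> bool" where
  "category C \<longleftrightarrow>
     (\<forall>f\<in>Arr C. Dom C f \<in> Obj C \<and> Cod C f \<in> Obj C) \<and>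
     (\<forall>x\<in>Obj C. Id C x \<in> Arr C \<and> Dom C (Id C x) = x \<and> Cod C (Id C x) = x) \<and>
     (\<forall>f\<in>Arr C. \<forall>g\<in>Arr C. Cod C f = Dom C g \<longrightarrow>
        Comp C g f \<in> Arr C \<and> Dom C (Comp C g f) = Dom C f \<and> Cod C (Comp C g f) = Cod C g) \<and>
     (\<forall>f\<in>Arr C. Comp C f (Id C (Dom C f)) = f \<and> Comp C (Id C (Cod C f)) f = f) \<and>
     (\<forall>f\<in>Arr C. \<forall>g\<in>Arr C. \<forall>h\<in>Arr C. Cod C f = Dom C g \<longrightarrow> Cod C g = Dom C h \<longrightarrow>
        Comp C h (Comp C g f) = Comp C (Comp C h g) f)"

definition "functor" :: "('o,'a) cat \<Rightarrow> ('p,'b) cat \<Rightarrow> ('o \<Rightarrow> 'p) \<Rightarrow> ('a \<Rightarrow> 'b) \<Rightarrow> bool" where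
  "functor C D Fo Fa \<longleftrightarrow>
     (\<forall>x\<in>Obj C. Fo x \<in> Obj D) \<and>
     (\<forall>f\<in>Arr C. Fa f \<in> Arr D \<and> Dom D (Fa f) = Fo (Dom C f) \<and> Cod D (Fa f) = Fo (Cod C f)) \<and>
     (\<forall>x\<in>Obj C. Fa (Id C x) = Id D (Fo x)) \<and>
     (\<forall>f\<in>Arr C. \<forall>g\<in>Arr C. Cod C f = Dom C g \<longrightarrow> Fa (Comp C g f) = Comp D (Fa g) (Fa f))"

definition is_id :: "('o,'a) cat \<Rightarrow> 'a \<Rightarrow> bool" where
  "is_id C f \<longleftrightarrow> f = Id C (Dom C f)"

text \<open>A q-simplex X : [q] \<rightarrow> C is represented as the chain (X_0, [f_1,...,f_q])
  with f_i : X_(i-1) \<rightarrow> X_i (list index i-1).\<close>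
type_synonym ('o,'a) simplex = "'o \<times> 'a list"

definition dimS :: "('o,'a) simplex \<Rightarrow> nat" where
  "dimS X = length (snd X)"

definition objS :: "('o,'a) cat \<Rightarrow> ('o,'a) simplex \<Rightarrow> nat \<Rightarrow> 'o" where
  "objS C X i = (if i = 0 then fst X else Cod C (snd X ! (i - 1)))"

definition simplex :: "('o,'a) cat \<Rightarrow> ('o,'a) simplex \<Rightarrow> bool" where
  "simplex C X \<longleftrightarrow> fst X \<in> Obj C \<and>
     (\<forall>i < dimS X. snd X ! i \<in> Arr C \<and> Dom C (snd X ! i) = objS C X i)"

definition nondeg :: "('o,'a) cat \<Rightarrow> ('o,'a) simplex \<Rightarrow> bool" where
  "nondeg C X \<longleftrightarrow> simplex C X \<and> (\<forall>f \<in> set (snd X). \<not> is_id C f)"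

text \<open>X(i \<rightarrow> j) for i \<le> j: the composite f_j \<circ> ... \<circ> f_(i+1) (identity if i = j).\<close>
fun chain_comp :: "('o,'a) cat \<Rightarrow> ('o,'a) simplex \<Rightarrow> nat \<Rightarrow> nat \<Rightarrow> 'a" where
  "chain_comp C X i 0 = Id C (objS C X i)"
| "chain_comp C X i (Suc j) =
     (if i \<le> j then Comp C (snd X ! j) (chain_comp C X i j) else Id C (objS C X i))"

text \<open>Y \<circ> \<xi> for an order-preserving \<xi> : [q] \<rightarrow> [q_Y].\<close>
definition precomp :: "('o,'a) cat \<Rightarrow> ('o,'a) simplex \<Rightarrow> nat \<Rightarrow> (nat \<Rightarrow> nat) \<Rightarrow> ('o,'a) simplex" where
  "precomp C Y q \<xi> = (objS C Y (\<xi> 0), map (\<lambda>i. chain_comp C Y (\<xi> i) (\<xi> (Suc i))) [0..<q])"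

definition opmap :: "nat \<Rightarrow> nat \<Rightarrow> (nat \<Rightarrow> nat) \<Rightarrow> bool" where
  "opmap p q \<xi> \<longleftrightarrow> \<xi> \<in> {0..p} \<rightarrow>\<^sub>E {0..q} \<and> mono_on {0..p} \<xi>"

type_synonym ('o,'a) dmor = "('o,'a) simplex \<times> (nat \<Rightarrow> nat) \<times> ('o,'a) simplex"

definition srcM :: "('o,'a) dmor \<Rightarrow> ('o,'a) simplex" where "srcM \<phi> = fst \<phi>"
definition mapM :: "('o,'a) dmor \<Rightarrow> nat \<Rightarrow> nat" where "mapM \<phi> = fst (snd \<phi>)"
definition tgtM :: "('o,'a) dmor \<Rightarrow> ('o,'a) simplex" where "tgtM \<phi> = snd (snd \<phi>)"

text \<open>\<xi>_* : X \<rightarrow> Y, with Y \<circ> \<xi> = X.\<close>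
definition dmor :: "('o,'a) cat \<Rightarrow> ('o,'a) dmor \<Rightarrow> bool" where
  "dmor C \<phi> \<longleftrightarrow> simplex C (srcM \<phi>) \<and> simplex C (tgtM \<phi>) \<and>
     opmap (dimS (srcM \<phi>)) (dimS (tgtM \<phi>)) (mapM \<phi>) \<and>
     precomp C (tgtM \<phi>) (dimS (srcM \<phi>)) (mapM \<phi>) = srcM \<phi>"

definition compM :: "('o,'a) dmor \<Rightarrow> ('o,'a) dmor \<Rightarrow> ('o,'a) dmor" where
  "compM \<psi> \<phi> = (srcM \<phi>, compose {0..dimS (srcM \<phi>)} (mapM \<psi>) (mapM \<phi>), tgtM \<psi>)"

inductive msim :: "('o,'a) cat \<Rightarrow> ('o,'a) dmor \<Rightarrow> ('o,'a) dmor \<Rightarrow> bool" for C where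
  elem: "\<lbrakk> simplex C X; q = dimS X; opmap (Suc q) q s; s ` {0..Suc q} = {0..q};
           opmap q (Suc q) d; \<forall>i\<in>{0..q}. s (d i) = i;
           opmap q (Suc q) d'; \<forall>i\<in>{0..q}. s (d' i) = i \<rbrakk>
         \<Longrightarrow> msim C (X, d, precomp C X (Suc q) s) (X, d', precomp C X (Suc q) s)"
| refl: "dmor C \<phi> \<Longrightarrow> msim C \<phi> \<phi>"
| sym: "msim C \<phi> \<psi> \<Longrightarrow> msim C \<psi> \<phi>"
| trans: "msim C \<phi> \<psi> \<Longrightarrow> msim C \<psi> \<chi> \<Longrightarrow> msim C \<phi> \<chi>"
| compL: "\<lbrakk> msim C \<phi> \<phi>'; dmor C \<psi>; srcM \<psi> = tgtM \<phi> \<rbrakk> \<Longrightarrow> msim C (compM \<psi> \<phi>) (compM \<psi> \<phi>')"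
| compR: "\<lbrakk> msim C \<phi> \<phi>'; dmor C \<chi>; tgtM \<chi> = srcM \<phi> \<rbrakk> \<Longrightarrow> msim C (compM \<phi> \<chi>) (compM \<phi>' \<chi>)"

definition mclass :: "('o,'a) cat \<Rightarrow> ('o,'a) dmor \<Rightarrow> ('o,'a) dmor set" where
  "mclass C \<phi> = {\<psi>. msim C \<phi> \<psi>}"

text \<open>Objects of Sd(C): the non-degenerate simplices; arrows: \<sim>-classes of
  morphisms of \<Delta>/C between non-degenerate simplices.\<close>
definition Sd_arrs :: "('o,'a) cat \<Rightarrow> ('o,'a) dmor set set" where
  "Sd_arrs C = {mclass C \<phi> | \<phi>. dmor C \<phi> \<and> nondeg C (srcM \<phi>) \<and> nondeg C (tgtM \<phi>)}"

definition eps_obj :: "('o,'a) cat \<Rightarrow> ('o,'a) simplex \<Rightarrow> 'o" where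
  "eps_obj C X = objS C X (dimS X)"

definition eps_rep :: "('o,'a) cat \<Rightarrow> ('o,'a) dmor \<Rightarrow> 'a" where
  "eps_rep C \<phi> = chain_comp C (tgtM \<phi>) (mapM \<phi> (dimS (srcM \<phi>))) (dimS (tgtM \<phi>))"

definition eps_arr :: "('o,'a) cat \<Rightarrow> ('o,'a) dmor set \<Rightarrow> 'a" where
  "eps_arr C c = eps_rep C (SOME \<phi>. \<phi> \<in> c)"

definition rS :: "('o,'a) cat \<Rightarrow> ('o,'a) simplex \<Rightarrow> ('o,'a) simplex" where
  "rS C X = (fst X, filter (\<lambda>f. \<not> is_id C f) (snd X))"

definition alphaS :: "('o,'a) cat \<Rightarrow> ('o,'a) simplex \<Rightarrow> nat \<Rightarrow> nat" where
  "alphaS C X = restrict (\<lambda>i. length (filter (\<lambda>f. \<not> is_id C f) (take i (snd X)))) {0..dimS X}"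

definition fS :: "('o \<Rightarrow> 'p) \<Rightarrow> ('a \<Rightarrow> 'b) \<Rightarrow> ('o,'a) simplex \<Rightarrow> ('p,'b) simplex" where
  "fS Fo Fa X = (Fo (fst X), map Fa (snd X))"

definition Sd_obj :: "('p,'b) cat \<Rightarrow> ('o \<Rightarrow> 'p) \<Rightarrow> ('a \<Rightarrow> 'b) \<Rightarrow> ('o,'a) simplex \<Rightarrow> ('p,'b) simplex" where
  "Sd_obj D Fo Fa X = rS D (fS Fo Fa X)"

definition Sd_rep :: "('p,'b) cat \<Rightarrow> ('o \<Rightarrow> 'p) \<Rightarrow> ('a \<Rightarrow> 'b) \<Rightarrow> ('o,'a) dmor \<Rightarrow> ('p,'b) dmor" where
  "Sd_rep D Fo Fa \<phi> =
    (let fX = fS Fo Fa (srcM \<phi>); fY = fS Fo Fa (tgtM \<phi>);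
         p = dimS (rS D fX);
         \<sigma> = (SOME \<sigma>. opmap p (dimS fX) \<sigma> \<and> (\<forall>i\<in>{0..p}. alphaS D fX (\<sigma> i) = i))
     in (rS D fX, restrict (alphaS D fY \<circ> mapM \<phi> \<circ> \<sigma>) {0..p}, rS D fY))"

definition Sd_arr :: "('o,'a) cat \<Rightarrow> ('p,'b) cat \<Rightarrow> ('o \<Rightarrow> 'p) \<Rightarrow> ('a \<Rightarrow> 'b)
                      \<Rightarrow> ('o,'a) dmor set \<Rightarrow> ('p,'b) dmor set" where
  "Sd_arr C D Fo Fa c = mclass D (Sd_rep D Fo Fa (SOME \<phi>. \<phi> \<in> c))"

end

theory Submission imports Defs begin

lemma catD:
  assumes "category C"
  shows "f\<in>Arr C \<Longrightarrow> Dom C f \<in> Obj C" "f\<in>Arr C \<Longrightarrow> Cod C f \<in> Obj C"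
    "x\<in>Obj C \<Longrightarrow> Id C x \<in> Arr C" "x\<in>Obj C \<Longrightarrow> Dom C (Id C x) = x" "x\<in>Obj C \<Longrightarrow> Cod C (Id C x) = x"
    "f\<in>Arr C \<Longrightarrow> g\<in>Arr C \<Longrightarrow> Cod C f = Dom C g \<Longrightarrow> Comp C g f \<in> Arr C"
    "f\<in>Arr C \<Longrightarrow> g\<in>Arr C \<Longrightarrow> Cod C f = Dom C g \<Longrightarrow> Dom C (Comp C g f) = Dom C f"
    "f\<in>Arr C \<Longrightarrow> g\<in>Arr C \<Longrightarrow> Cod C f = Dom C g \<Longrightarrow> Cod C (Comp C g f) = Cod C g"
    "f\<in>Arr C \<Longrightarrow> Comp C f (Id C (Dom C f)) = f" "f\<in>Arr C \<Longrightarrow> Comp C (Id C (Cod C f)) f = f"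
    "f\<in>Arr C \<Longrightarrow> g\<in>Arr C \<Longrightarrow> h\<in>Arr C \<Longrightarrow> Cod C f = Dom C g \<Longrightarrow> Cod C g = Dom C h \<Longrightarrow>
        Comp C h (Comp C g f) = Comp C (Comp C h g) f"
  using assms unfolding category_def by blast+

lemma chain_comp_refl: "chain_comp C X i i = Id C (objS C X i)"
  by (cases i) auto

lemma objS_Suc[simp]: "objS C X (Suc i) = Cod C (snd X ! i)"
  by (simp add: objS_def)
lemma objS_0[simp]: "objS C X 0 = fst X"
  by (simp add: objS_def)

lemma objS_obj:
  assumes "category C" "simplex C X" "i \<le> dimS X"
  shows "objS C X i \<in> Obj C"
proof (cases i)
  case 0 then show ?thesis using assms by (simp add: simplex_def)
next
  case (Suc k) then show ?thesis using assms catD(2)[OF assms(1)] by (simp add: simplex_def)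
qed

lemma simplexD: "simplex C X \<Longrightarrow> i < dimS X \<Longrightarrow> snd X ! i \<in> Arr C \<and> Dom C (snd X ! i) = objS C X i"
  by (simp add: simplex_def)

lemma chain_comp_arr:
  assumes "category C" "simplex C X" "i \<le> j" "j \<le> dimS X"
  shows "chain_comp C X i j \<in> Arr C \<and> Dom C (chain_comp C X i j) = objS C X i \<and> Cod C (chain_comp C X i j) = objS C X j"
  using assms(3,4)
proof (induction j)
  case 0
  have "objS C X 0 \<in> Obj C" using objS_obj[OF assms(1,2), of 0] by simp
  then show ?case using 0 catD[OF assms(1)] by auto
next
  case (Suc j)
  show ?case
  proof (cases "i = Suc j")
    case True
    have "objS C X (Suc j) \<in> Obj C" using objS_obj[OF assms(1,2), of "Suc j"] Suc.prems by simp
    then show ?thesis using True catD[OF assms(1)]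
      by (simp only: chain_comp_refl)
  next
    case False
    then have ij: "i \<le> j" using Suc.prems by simp
    have IH: "chain_comp C X i j \<in> Arr C \<and> Dom C (chain_comp C X i j) = objS C X i \<and> Cod C (chain_comp C X i j) = objS C X j"
      using Suc ij by simp
    have s: "snd X ! j \<in> Arr C \<and> Dom C (snd X ! j) = objS C X j" using simplexD[OF assms(2)] Suc.prems by simp
    show ?thesis using IH s ij catD(6,7,8)[OF assms(1)] by simp
  qed
qed

lemma chain_comp_split:
  assumes "category C" "simplex C X" "i \<le> j" "j \<le> k" "k \<le> dimS X"
  shows "chain_comp C X i k = Comp C (chain_comp C X j k) (chain_comp C X i j)"
  using assms(4,5)
proof (induction k)
  case 0
  have "objS C X 0 \<in> Obj C" using objS_obj[OF assms(1,2), of 0] by simp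
  then show ?case using 0 assms(3) catD(3,5,10)[OF assms(1)] by (metis chain_comp_refl le_zero_eq)
next
  case (Suc k)
  show ?case
  proof (cases "j = Suc k")
    case True
    then show ?thesis using assms(3) Suc.prems chain_comp_arr[OF assms(1,2), of i "Suc k"] catD(10)[OF assms(1)]
      by (metis chain_comp_refl)
  next
    case False
    then have jk: "j \<le> k" using Suc.prems by simp
    have IH: "chain_comp C X i k = Comp C (chain_comp C X j k) (chain_comp C X i j)" using Suc jk by simp
    have s: "snd X ! k \<in> Arr C \<and> Dom C (snd X ! k) = objS C X k" using simplexD[OF assms(2)] Suc.prems by simp
    have a1: "chain_comp C X i j \<in> Arr C \<and> Dom C (chain_comp C X i j) = objS C X i \<and> Cod C (chain_comp C X i j) = objS C X j"
      using chain_comp_arr[OF assms(1,2) assms(3)] jk Suc.prems by simp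
    have a2: "chain_comp C X j k \<in> Arr C \<and> Dom C (chain_comp C X j k) = objS C X j \<and> Cod C (chain_comp C X j k) = objS C X k"
      using chain_comp_arr[OF assms(1,2) jk] Suc.prems by simp
    have "chain_comp C X i (Suc k) = Comp C (snd X ! k) (chain_comp C X i k)" using jk assms(3) by simp
    also have "\<dots> = Comp C (Comp C (snd X ! k) (chain_comp C X j k)) (chain_comp C X i j)"
      using IH a1 a2 s catD(11)[OF assms(1)] by simp
    also have "\<dots> = Comp C (chain_comp C X j (Suc k)) (chain_comp C X i j)" using jk by simp
    finally show ?thesis .
  qed
qed


lemma opmapD: assumes "opmap p q \<xi>"
  shows "i \<le> p \<Longrightarrow> \<xi> i \<le> q" "i \<le> j \<Longrightarrow> j \<le> p \<Longrightarrow> \<xi> i \<le> \<xi> j" "i > p \<Longrightarrow> \<xi> i = undefined"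
  using assms unfolding opmap_def mono_on_def PiE_def extensional_def by auto

lemma dimS_precomp[simp]: "dimS (precomp C Y q \<xi>) = q"
  by (simp add: precomp_def dimS_def)

lemma precomp_nth: "k < q \<Longrightarrow> snd (precomp C Y q \<xi>) ! k = chain_comp C Y (\<xi> k) (\<xi> (Suc k))"
  by (simp add: precomp_def)

lemma objS_precomp:
  assumes "category C" "simplex C Y" "opmap q (dimS Y) \<xi>" "i \<le> q"
  shows "objS C (precomp C Y q \<xi>) i = objS C Y (\<xi> i)"
proof (cases i)
  case 0 then show ?thesis by (simp add: precomp_def)
next
  case (Suc k)
  then have "k < q" using assms by simp
  then show ?thesis using Suc precomp_nth[of k q C Y \<xi>]
      chain_comp_arr[OF assms(1,2), of "\<xi> k" "\<xi> (Suc k)"] opmapD[OF assms(3)] assms(4) by simp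
qed

lemma chain_comp_precomp:
  assumes "category C" "simplex C Y" "opmap q (dimS Y) \<xi>" "i \<le> j" "j \<le> q"
  shows "chain_comp C (precomp C Y q \<xi>) i j = chain_comp C Y (\<xi> i) (\<xi> j)"
  using assms(4,5)
proof (induction j)
  case 0
  then show ?case using objS_precomp[OF assms(1,2,3), of 0] by (simp add: chain_comp_refl)
next
  case (Suc j)
  show ?case
  proof (cases "i = Suc j")
    case True
    then show ?thesis using objS_precomp[OF assms(1,2,3), of i] Suc.prems by (simp only: chain_comp_refl)
  next
    case False
    then have ij: "i \<le> j" using Suc.prems by simp
    have "chain_comp C (precomp C Y q \<xi>) i (Suc j) = Comp C (chain_comp C Y (\<xi> j) (\<xi> (Suc j))) (chain_comp C Y (\<xi> i) (\<xi> j))"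
      using ij Suc precomp_nth[of j q C Y \<xi>] by simp
    also have "\<dots> = chain_comp C Y (\<xi> i) (\<xi> (Suc j))"
      using chain_comp_split[OF assms(1,2), of "\<xi> i" "\<xi> j" "\<xi> (Suc j)"] opmapD[OF assms(3)] ij Suc.prems by simp
    finally show ?thesis .
  qed
qed

lemma precomp_simplex:
  assumes "category C" "simplex C Y" "opmap q (dimS Y) \<xi>"
  shows "simplex C (precomp C Y q \<xi>)"
  unfolding simplex_def
proof (intro conjI allI impI)
  show "fst (precomp C Y q \<xi>) \<in> Obj C"
    using objS_obj[OF assms(1,2), of "\<xi> 0"] opmapD[OF assms(3)] by (simp add: precomp_def)
  fix i assume i: "i < dimS (precomp C Y q \<xi>)"
  then have iq: "i < q" by simp
  show "snd (precomp C Y q \<xi>) ! i \<in> Arr C" "Dom C (snd (precomp C Y q \<xi>) ! i) = objS C (precomp C Y q \<xi>) i"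
    using chain_comp_arr[OF assms(1,2), of "\<xi> i" "\<xi> (Suc i)"] opmapD[OF assms(3)] iq
      objS_precomp[OF assms, of i] by (auto simp add: precomp_nth)
qed

lemma precomp_cong: "(\<And>i. i \<le> q \<Longrightarrow> \<xi> i = \<xi>' i) \<Longrightarrow> precomp C Y q \<xi> = precomp C Y q \<xi>'"
  unfolding precomp_def by auto

lemma simplex_eqI: "fst X = fst Y \<Longrightarrow> dimS X = dimS Y \<Longrightarrow> (\<And>k. k < dimS X \<Longrightarrow> snd X ! k = snd Y ! k) \<Longrightarrow> X = Y"
  by (metis dimS_def nth_equalityI prod_eq_iff)

lemma opmap_comp: "opmap q1 q0 \<zeta> \<Longrightarrow> opmap q2 q1 \<xi> \<Longrightarrow> opmap q2 q0 (compose {0..q2} \<zeta> \<xi>)"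
  unfolding opmap_def mono_on_def compose_def PiE_def Pi_def extensional_def by auto

lemma precomp_precomp:
  assumes "category C" "simplex C Y" "opmap q1 (dimS Y) \<zeta>" "opmap q2 q1 \<xi>"
  shows "precomp C (precomp C Y q1 \<zeta>) q2 \<xi> = precomp C Y q2 (\<zeta> \<circ> \<xi>)"
proof (rule simplex_eqI)
  show "fst (precomp C (precomp C Y q1 \<zeta>) q2 \<xi>) = fst (precomp C Y q2 (\<zeta> \<circ> \<xi>))"
    using objS_precomp[OF assms(1,2,3), of "\<xi> 0"] opmapD[OF assms(4)] by (simp add: precomp_def)
  fix k assume "k < dimS (precomp C (precomp C Y q1 \<zeta>) q2 \<xi>)"
  then have k: "k < q2" by simp
  then show "snd (precomp C (precomp C Y q1 \<zeta>) q2 \<xi>) ! k = snd (precomp C Y q2 (\<zeta> \<circ> \<xi>)) ! k"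
    using chain_comp_precomp[OF assms(1,2,3), of "\<xi> k" "\<xi> (Suc k)"] opmapD[OF assms(4)]
    by (simp add: precomp_nth)
qed simp

lemma precomp_id:
  assumes "category C" "simplex C X"
  shows "precomp C X (dimS X) id = X"
proof (rule simplex_eqI)
  show "fst (precomp C X (dimS X) id) = fst X" by (simp add: precomp_def)
  fix k assume "k < dimS (precomp C X (dimS X) id)"
  then have k: "k < dimS X" by simp
  have s: "snd X ! k \<in> Arr C \<and> Dom C (snd X ! k) = objS C X k" using simplexD[OF assms(2) k] .
  show "snd (precomp C X (dimS X) id) ! k = snd X ! k"
    using s catD(9)[OF assms(1), of "snd X ! k"] k by (simp add: chain_comp_refl precomp_nth)
qed simp


lemma comp_dmor:
  assumes C: "category C" and "dmor C \<phi>" "dmor C \<psi>" "srcM \<psi> = tgtM \<phi>"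
  shows "dmor C (compM \<psi> \<phi>) \<and> eps_rep C (compM \<psi> \<phi>) = Comp C (eps_rep C \<psi>) (eps_rep C \<phi>)"
proof -
  define X where "X = srcM \<phi>"
  define Y where "Y = tgtM \<phi>"
  define Z where "Z = tgtM \<psi>"
  define \<xi> where "\<xi> = mapM \<phi>"
  define \<zeta> where "\<zeta> = mapM \<psi>"
  have sX: "simplex C X" and sY: "simplex C Y" and sZ: "simplex C Z"
    and o1: "opmap (dimS X) (dimS Y) \<xi>" and o2: "opmap (dimS Y) (dimS Z) \<zeta>"
    and e1: "precomp C Y (dimS X) \<xi> = X" and e2: "precomp C Z (dimS Y) \<zeta> = Y"
    using assms unfolding dmor_def X_def Y_def Z_def \<xi>_def \<zeta>_def by auto
  have cm: "compM \<psi> \<phi> = (X, compose {0..dimS X} \<zeta> \<xi>, Z)"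
    unfolding compM_def X_def Z_def \<xi>_def \<zeta>_def by simp
  have oc: "opmap (dimS X) (dimS Z) (compose {0..dimS X} \<zeta> \<xi>)" using opmap_comp[OF o2 o1] .
  have "precomp C Z (dimS X) (compose {0..dimS X} \<zeta> \<xi>) = precomp C Z (dimS X) (\<zeta> \<circ> \<xi>)"
    by (rule precomp_cong) (simp add: compose_def)
  also have "\<dots> = X" using precomp_precomp[OF C sZ o2 o1] e1 e2 by simp
  finally have pe: "precomp C Z (dimS X) (compose {0..dimS X} \<zeta> \<xi>) = X" .
  have d: "dmor C (compM \<psi> \<phi>)" unfolding cm dmor_def srcM_def tgtM_def mapM_def
    using sX sZ oc pe by simp
  have a1: "\<xi> (dimS X) \<le> dimS Y" using opmapD(1)[OF o1] by simp
  have a2: "\<zeta> (\<xi> (dimS X)) \<le> \<zeta> (dimS Y)" "\<zeta> (dimS Y) \<le> dimS Z" using opmapD[OF o2] a1 by auto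
  have "eps_rep C (compM \<psi> \<phi>) = chain_comp C Z (\<zeta> (\<xi> (dimS X))) (dimS Z)"
    unfolding cm eps_rep_def srcM_def tgtM_def mapM_def by (simp add: compose_def)
  also have "\<dots> = Comp C (chain_comp C Z (\<zeta> (dimS Y)) (dimS Z)) (chain_comp C Z (\<zeta> (\<xi> (dimS X))) (\<zeta> (dimS Y)))"
    using chain_comp_split[OF C sZ a2] by simp
  also have "chain_comp C Z (\<zeta> (\<xi> (dimS X))) (\<zeta> (dimS Y)) = chain_comp C Y (\<xi> (dimS X)) (dimS Y)"
    using chain_comp_precomp[OF C sZ o2 a1] e2 by simp
  finally show ?thesis using d assms(4) unfolding eps_rep_def X_def Y_def Z_def \<xi>_def \<zeta>_def by simp
qed

lemma msim_inv:
  assumes "msim C \<phi> \<psi>" "category C"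
  shows "dmor C \<phi> \<and> dmor C \<psi> \<and> srcM \<phi> = srcM \<psi> \<and> tgtM \<phi> = tgtM \<psi> \<and> eps_rep C \<phi> = eps_rep C \<psi>"
  using assms(1)
proof induction
  case (elem X q s d d')
  let ?Y = "precomp C X (Suc q) s"
  have os: "opmap (Suc q) (dimS X) s" using elem by simp
  have sY: "simplex C ?Y" using precomp_simplex[OF assms(2) elem(1) os] .
  have dm: "dmor C (X, e, ?Y)" if "opmap q (Suc q) e" "\<forall>i\<in>{0..q}. s (e i) = i" for e
  proof -
    have "precomp C ?Y q e = precomp C X q (s \<circ> e)" using precomp_precomp[OF assms(2) elem(1) os] that by simp
    also have "\<dots> = precomp C X q id" by (rule precomp_cong) (use that in auto)
    also have "\<dots> = X" using precomp_id[OF assms(2) elem(1)] elem(2) by simp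
    finally show ?thesis unfolding dmor_def srcM_def tgtM_def mapM_def using elem(1,2) sY that by simp
  qed
  have ep: "eps_rep C (X, e, ?Y) = chain_comp C X q (s (Suc q))" if "opmap q (Suc q) e" "\<forall>i\<in>{0..q}. s (e i) = i" for e
  proof -
    have "e q \<le> Suc q" using opmapD(1)[OF that(1)] by simp
    then show ?thesis unfolding eps_rep_def srcM_def tgtM_def mapM_def
      using chain_comp_precomp[OF assms(2) elem(1) os, of "e q" "Suc q"] that(2) elem(2) by simp
  qed
  show ?case using dm ep elem by (simp add: srcM_def tgtM_def)
next
  case (refl \<phi>) then show ?case by simp
next
  case (sym \<phi> \<psi>) then show ?case by simp
next
  case (trans \<phi> \<psi> \<chi>) then show ?case by simp
next
  case (compL \<phi> \<phi>' \<psi>)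
  then show ?case using comp_dmor[OF assms(2), of \<phi> \<psi>] comp_dmor[OF assms(2), of \<phi>' \<psi>]
    by (simp add: compM_def srcM_def tgtM_def)
next
  case (compR \<phi> \<phi>' \<chi>)
  then show ?case using comp_dmor[OF assms(2), of \<chi> \<phi>] comp_dmor[OF assms(2), of \<chi> \<phi>']
    by (simp add: compM_def srcM_def tgtM_def mapM_def)
qed


lemma functorD:
  assumes "functor C D Fo Fa"
  shows "x\<in>Obj C \<Longrightarrow> Fo x \<in> Obj D" "f\<in>Arr C \<Longrightarrow> Fa f \<in> Arr D"
    "f\<in>Arr C \<Longrightarrow> Dom D (Fa f) = Fo (Dom C f)" "f\<in>Arr C \<Longrightarrow> Cod D (Fa f) = Fo (Cod C f)"
    "x\<in>Obj C \<Longrightarrow> Fa (Id C x) = Id D (Fo x)"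
    "f\<in>Arr C \<Longrightarrow> g\<in>Arr C \<Longrightarrow> Cod C f = Dom C g \<Longrightarrow> Fa (Comp C g f) = Comp D (Fa g) (Fa f)"
  using assms unfolding functor_def by blast+

lemma dimS_fS[simp]: "dimS (fS Fo Fa Y) = dimS Y"
  by (simp add: fS_def dimS_def)

lemma objS_fS:
  assumes "functor C D Fo Fa" "simplex C Y" "i \<le> dimS Y"
  shows "objS D (fS Fo Fa Y) i = Fo (objS C Y i)"
proof (cases i)
  case 0 then show ?thesis by (simp add: fS_def)
next
  case (Suc k)
  then have "k < dimS Y" using assms by simp
  then show ?thesis using Suc simplexD[OF assms(2)] functorD(4)[OF assms(1)]
    by (simp add: fS_def dimS_def)
qed

lemma fS_simplex:
  assumes "functor C D Fo Fa" "simplex C Y"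
  shows "simplex D (fS Fo Fa Y)"
  unfolding simplex_def
proof (intro conjI allI impI)
  show "fst (fS Fo Fa Y) \<in> Obj D" using assms functorD(1)[OF assms(1)] by (simp add: fS_def simplex_def)
  fix i assume "i < dimS (fS Fo Fa Y)"
  then have i: "i < dimS Y" by simp
  then have ii: "i < length (snd Y)" by (simp add: dimS_def)
  show "snd (fS Fo Fa Y) ! i \<in> Arr D" "Dom D (snd (fS Fo Fa Y) ! i) = objS D (fS Fo Fa Y) i"
    using simplexD[OF assms(2) i] functorD[OF assms(1)] objS_fS[OF assms, of i] i ii by (auto simp: fS_def)
qed

lemma Fa_chain_comp:
  assumes "category C" "functor C D Fo Fa" "simplex C Y" "i \<le> j" "j \<le> dimS Y"
  shows "Fa (chain_comp C Y i j) = chain_comp D (fS Fo Fa Y) i j"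
  using assms(4,5)
proof (induction j)
  case 0
  then show ?case using objS_obj[OF assms(1,3), of 0] functorD(5)[OF assms(2)] objS_fS[OF assms(2,3), of 0]
    by (simp only: chain_comp_refl) simp
next
  case (Suc j)
  show ?case
  proof (cases "i = Suc j")
    case True
    then show ?thesis using objS_obj[OF assms(1,3), of i] functorD(5)[OF assms(2)] objS_fS[OF assms(2,3), of i] Suc.prems
      by (simp only: chain_comp_refl)
  next
    case False
    then have ij: "i \<le> j" using Suc.prems by simp
    have j: "j < dimS Y" "j < length (snd Y)" using Suc.prems by (auto simp: dimS_def)
    have s: "snd Y ! j \<in> Arr C \<and> Dom C (snd Y ! j) = objS C Y j" using simplexD[OF assms(3) j(1)] .
    have a: "chain_comp C Y i j \<in> Arr C \<and> Cod C (chain_comp C Y i j) = objS C Y j"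
      using chain_comp_arr[OF assms(1,3) ij] j by simp
    show ?thesis using Suc ij s a functorD(6)[OF assms(2), of "chain_comp C Y i j" "snd Y ! j"] j
      by (simp add: fS_def)
  qed
qed

lemma fS_precomp:
  assumes "category C" "functor C D Fo Fa" "simplex C Y" "opmap q (dimS Y) \<xi>"
  shows "fS Fo Fa (precomp C Y q \<xi>) = precomp D (fS Fo Fa Y) q \<xi>"
proof (rule simplex_eqI)
  show "fst (fS Fo Fa (precomp C Y q \<xi>)) = fst (precomp D (fS Fo Fa Y) q \<xi>)"
    using objS_fS[OF assms(2,3), of "\<xi> 0"] opmapD[OF assms(4)] by (simp add: fS_def precomp_def)
  fix k assume "k < dimS (fS Fo Fa (precomp C Y q \<xi>))"
  then have k: "k < q" by simp
  show "snd (fS Fo Fa (precomp C Y q \<xi>)) ! k = snd (precomp D (fS Fo Fa Y) q \<xi>) ! k"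
    using Fa_chain_comp[OF assms(1,2,3), of "\<xi> k" "\<xi> (Suc k)"] opmapD[OF assms(4)] k
    by (simp add: fS_def precomp_nth precomp_def[of C])
qed simp


abbreviation nid where "nid C \<equiv> (\<lambda>f. \<not> is_id C f)"

lemma alphaS_eq: "j \<le> dimS W \<Longrightarrow> alphaS C W j = length (filter (nid C) (take j (snd W)))"
  by (simp add: alphaS_def)

lemma alphaS_0[simp]: "alphaS C W 0 = 0"
  by (simp add: alphaS_def)

lemma alphaS_Suc: "j < dimS W \<Longrightarrow> alphaS C W (Suc j) = alphaS C W j + (if is_id C (snd W ! j) then 0 else 1)"
  by (simp add: alphaS_eq take_Suc_conv_app_nth dimS_def)

lemma alphaS_mono: "i \<le> j \<Longrightarrow> j \<le> dimS W \<Longrightarrow> alphaS C W i \<le> alphaS C W j"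
proof (induction j)
  case 0 then show ?case by simp
next
  case (Suc j)
  then show ?case using alphaS_Suc[of j W C] by (cases "i = Suc j") auto
qed

lemma dimS_rS: "dimS (rS C W) = alphaS C W (dimS W)"
  by (simp add: alphaS_eq rS_def dimS_def)

lemma rS_nth:
  assumes "j < dimS W" "\<not> is_id C (snd W ! j)"
  shows "snd (rS C W) ! (alphaS C W j) = snd W ! j"
proof -
  have j: "j < length (snd W)" using assms by (simp add: dimS_def)
  have "snd W = take j (snd W) @ snd W ! j # drop (Suc j) (snd W)" using id_take_nth_drop[OF j] .
  then have "filter (nid C) (snd W) = filter (nid C) (take j (snd W)) @ snd W ! j # filter (nid C) (drop (Suc j) (snd W))"
    using assms(2) by (metis filter.simps(2) filter_append)
  then show ?thesis using assms by (simp add: rS_def alphaS_eq nth_append)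
qed

lemma objS_rS:
  assumes "category C" "simplex C W" "j \<le> dimS W"
  shows "objS C (rS C W) (alphaS C W j) = objS C W j"
  using assms(3)
proof (induction j)
  case 0 then show ?case by (simp add: rS_def)
next
  case (Suc j)
  then have j: "j < dimS W" by simp
  have s: "snd W ! j \<in> Arr C \<and> Dom C (snd W ! j) = objS C W j" using simplexD[OF assms(2) j] .
  show ?case
  proof (cases "is_id C (snd W ! j)")
    case True
    then have "snd W ! j = Id C (objS C W j)" using s by (simp add: is_id_def)
    then have "Cod C (snd W ! j) = objS C W j" using catD(5)[OF assms(1)] objS_obj[OF assms(1,2), of j] j by simp
    then show ?thesis using True Suc j alphaS_Suc[OF j, of C] by simp
  next
    case False
    then show ?thesis using alphaS_Suc[OF j, of C] rS_nth[OF j False] by simp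
  qed
qed

lemma chain_comp_rS:
  assumes "category C" "simplex C W" "i \<le> j" "j \<le> dimS W"
  shows "chain_comp C (rS C W) (alphaS C W i) (alphaS C W j) = chain_comp C W i j"
  using assms(3,4)
proof (induction j)
  case 0
  then have "i = 0" by simp
  then show ?case using objS_rS[OF assms(1,2), of 0] by (simp only: chain_comp_refl alphaS_0)
next
  case (Suc j)
  show ?case
  proof (cases "i = Suc j")
    case True
    then show ?thesis using objS_rS[OF assms(1,2), of i] Suc.prems by (simp only: chain_comp_refl)
  next
    case False
    then have ij: "i \<le> j" and j: "j < dimS W" using Suc.prems by auto
    have IH: "chain_comp C (rS C W) (alphaS C W i) (alphaS C W j) = chain_comp C W i j" using Suc ij by simp
    have s: "snd W ! j \<in> Arr C \<and> Dom C (snd W ! j) = objS C W j" using simplexD[OF assms(2) j] .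
    have a: "chain_comp C W i j \<in> Arr C \<and> Cod C (chain_comp C W i j) = objS C W j"
      using chain_comp_arr[OF assms(1,2) ij] j by simp
    show ?thesis
    proof (cases "is_id C (snd W ! j)")
      case True
      then have "snd W ! j = Id C (objS C W j)" using s by (simp add: is_id_def)
      then have "chain_comp C W i (Suc j) = chain_comp C W i j"
        using ij a catD(10)[OF assms(1), of "chain_comp C W i j"] by simp
      then show ?thesis using IH alphaS_Suc[OF j, of C] True by simp
    next
      case False
      have m: "alphaS C W i \<le> alphaS C W j" using alphaS_mono[OF ij, of W C] j by simp
      show ?thesis using IH alphaS_Suc[OF j, of C] False rS_nth[OF j False] m ij by simp
    qed
  qed
qed

lemma simplex_Cons:
  assumes "category C" shows "simplex C (x, f # fs) \<longleftrightarrow> x \<in> Obj C \<and> f \<in> Arr C \<and> Dom C f = x \<and> simplex C (Cod C f, fs)"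
proof -
  have o: "objS C (x, f # fs) (Suc i) = objS C (Cod C f, fs) i" for i
    by (cases i) auto
  have "(\<forall>i < Suc (length fs). P i) \<longleftrightarrow> P 0 \<and> (\<forall>i < length fs. P (Suc i))" for P
    using less_Suc_eq_0_disj by auto
  then show ?thesis unfolding simplex_def dimS_def using o catD(2)[OF assms] by auto
qed

lemma simplex_Nil: "simplex C (x, []) \<longleftrightarrow> x \<in> Obj C"
  by (simp add: simplex_def dimS_def)

lemma rS_simplex_aux:
  assumes "category C"
  shows "simplex C (x, fs) \<Longrightarrow> simplex C (x, filter (nid C) fs)"
proof (induction fs arbitrary: x)
  case Nil then show ?case by simp
next
  case (Cons f fs)
  have "x \<in> Obj C \<and> f \<in> Arr C \<and> Dom C f = x \<and> simplex C (Cod C f, fs)" using Cons.prems simplex_Cons[OF assms] by simp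
  then have h: "x \<in> Obj C" "f \<in> Arr C" "Dom C f = x" "simplex C (Cod C f, fs)" by auto
  show ?case
  proof (cases "is_id C f")
    case True
    then have "Cod C f = x" using h catD(5)[OF assms] by (metis is_id_def)
    then show ?thesis using True Cons.IH h(4) by simp
  next
    case False
    then show ?thesis using Cons.IH[OF h(4)] h by (simp add: simplex_Cons[OF assms])
  qed
qed

lemma rS_simplex: "category C \<Longrightarrow> simplex C W \<Longrightarrow> simplex C (rS C W)"
  using rS_simplex_aux[of C "fst W" "snd W"] by (simp add: rS_def)

lemma alphaS_le: "j \<le> dimS W \<Longrightarrow> alphaS C W j \<le> j"
  by (simp add: alphaS_eq) (metis length_filter_le length_take min.absorb_iff2 min_def order_trans dimS_def)

lemma section_ex:
  "\<exists>\<sigma>. opmap (dimS (rS C W)) (dimS W) \<sigma> \<and> (\<forall>i\<in>{0..dimS (rS C W)}. alphaS C W (\<sigma> i) = i)"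
proof -
  define p where "p = dimS (rS C W)"
  define n where "n = dimS W"
  have pn: "p = alphaS C W n" using dimS_rS unfolding p_def n_def .
  define \<sigma> where "\<sigma> = restrict (\<lambda>i. LEAST j. i \<le> alphaS C W j) {0..p}"
  have L: "i \<le> alphaS C W (LEAST j. i \<le> alphaS C W j)" "(LEAST j. i \<le> alphaS C W j) \<le> n" if "i \<le> p" for i
    using that pn by (auto intro: LeastI Least_le)
  have A: "alphaS C W (\<sigma> i) = i" if "i \<le> p" for i
  proof -
    let ?l = "LEAST j. i \<le> alphaS C W j"
    have "alphaS C W ?l \<le> i"
    proof (cases ?l)
      case 0 then show ?thesis by simp
    next
      case (Suc m)
      then have "\<not> i \<le> alphaS C W m" using not_less_Least[of m] by (metis lessI)
      moreover have "m < n" using L(2)[OF that] Suc by simp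
      ultimately show ?thesis using alphaS_Suc[of m W C] Suc n_def by auto
    qed
    then show ?thesis using L(1)[OF that] that by (simp add: \<sigma>_def)
  qed
  have O: "opmap p n \<sigma>"
    unfolding opmap_def
  proof
    show "\<sigma> \<in> {0..p} \<rightarrow>\<^sub>E {0..n}" using L(2) by (auto simp: \<sigma>_def)
    show "mono_on {0..p} \<sigma>"
    proof (rule mono_onI)
      fix r s assume rs: "r \<in> {0..p}" "s \<in> {0..p}" "r \<le> s"
      then have "r \<le> alphaS C W (LEAST j. s \<le> alphaS C W j)" using L(1)[of s] by auto
      then show "\<sigma> r \<le> \<sigma> s" using rs by (auto simp: \<sigma>_def intro: Least_le)
    qed
  qed
  show ?thesis using O A unfolding p_def n_def by auto
qed


lemma Sd_main:
  assumes C: "category C" and D: "category D" and F: "functor C D Fo Fa" and dm: "dmor C \<psi>"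
  shows "dmor D (Sd_rep D Fo Fa \<psi>) \<and> Fa (eps_rep C \<psi>) = eps_rep D (Sd_rep D Fo Fa \<psi>)"
proof -
  define X where "X = srcM \<psi>"
  define Y where "Y = tgtM \<psi>"
  define \<xi> where "\<xi> = mapM \<psi>"
  have sX: "simplex C X" and sY: "simplex C Y" and o1: "opmap (dimS X) (dimS Y) \<xi>"
    and e1: "precomp C Y (dimS X) \<xi> = X"
    using dm unfolding dmor_def X_def Y_def \<xi>_def by auto
  define fX where "fX = fS Fo Fa X"
  define fY where "fY = fS Fo Fa Y"
  define qX where "qX = dimS X"
  define qY where "qY = dimS Y"
  have sfX: "simplex D fX" and sfY: "simplex D fY" using fS_simplex[OF F] sX sY fX_def fY_def by auto
  have dfX: "dimS fX = qX" and dfY: "dimS fY = qY" by (simp_all add: fX_def fY_def qX_def qY_def)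
  have o1': "opmap qX (dimS fY) \<xi>" using o1 dfY qX_def qY_def by simp
  have eqX: "fX = precomp D fY qX \<xi>" using fS_precomp[OF C F sY o1] e1 fX_def fY_def qX_def by simp
  define p where "p = dimS (rS D fX)"
  have pX: "alphaS D fX qX = p" using dimS_rS[of D fX] p_def dfX by simp
  define \<sigma> where "\<sigma> = (SOME \<sigma>. opmap p (dimS fX) \<sigma> \<and> (\<forall>i\<in>{0..p}. alphaS D fX (\<sigma> i) = i))"
  have \<sigma>P: "opmap p (dimS fX) \<sigma> \<and> (\<forall>i\<in>{0..p}. alphaS D fX (\<sigma> i) = i)"
    unfolding \<sigma>_def p_def using someI_ex[OF section_ex[of D fX]] .
  then have \<sigma>1: "i \<le> p \<Longrightarrow> \<sigma> i \<le> qX" and \<sigma>2: "i \<le> j \<Longrightarrow> j \<le> p \<Longrightarrow> \<sigma> i \<le> \<sigma> j"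
    and \<sigma>3: "i \<le> p \<Longrightarrow> alphaS D fX (\<sigma> i) = i" for i j
    using opmapD[of p "dimS fX" \<sigma>] dfX by auto
  have \<xi>1: "i \<le> qX \<Longrightarrow> \<xi> i \<le> qY" and \<xi>2: "i \<le> j \<Longrightarrow> j \<le> qX \<Longrightarrow> \<xi> i \<le> \<xi> j" for i j
    using opmapD[OF o1] qX_def qY_def by auto
  define \<mu> where "\<mu> = restrict (alphaS D fY \<circ> \<xi> \<circ> \<sigma>) {0..p}"
  have SR: "Sd_rep D Fo Fa \<psi> = (rS D fX, \<mu>, rS D fY)"
    unfolding Sd_rep_def Let_def \<mu>_def \<sigma>_def p_def fX_def fY_def X_def Y_def \<xi>_def by simp
  have dY: "dimS (rS D fY) = alphaS D fY qY" using dimS_rS[of D fY] dfY by simp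
  have om: "opmap p (dimS (rS D fY)) \<mu>"
    unfolding opmap_def
  proof
    show "\<mu> \<in> {0..p} \<rightarrow>\<^sub>E {0..dimS (rS D fY)}"
      using \<sigma>1 \<xi>1 alphaS_mono[of _ qY fY D] dY dfY by (auto simp: \<mu>_def)
    show "mono_on {0..p} \<mu>"
      by (rule mono_onI) (use \<sigma>1 \<sigma>2 \<xi>1 \<xi>2 alphaS_mono[of _ _ fY D] dfY in \<open>auto simp: \<mu>_def\<close>)
  qed
  have pre: "precomp D (rS D fY) p \<mu> = rS D fX"
  proof (rule simplex_eqI)
    have "fst (precomp D (rS D fY) p \<mu>) = objS D (rS D fY) (alphaS D fY (\<xi> (\<sigma> 0)))"
      by (simp add: precomp_def \<mu>_def)
    also have "\<dots> = objS D fY (\<xi> (\<sigma> 0))" using objS_rS[OF D sfY] \<xi>1 \<sigma>1 dfY by simp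
    also have "\<dots> = objS D fX (\<sigma> 0)" using objS_precomp[OF D sfY o1', of "\<sigma> 0"] \<sigma>1 eqX by simp
    also have "\<dots> = objS D (rS D fX) (alphaS D fX (\<sigma> 0))" using objS_rS[OF D sfX] \<sigma>1 dfX by simp
    also have "\<dots> = fst (rS D fX)" using \<sigma>3[of 0] by simp
    finally show "fst (precomp D (rS D fY) p \<mu>) = fst (rS D fX)" .
    show "dimS (precomp D (rS D fY) p \<mu>) = dimS (rS D fX)" using p_def by simp
    fix k assume "k < dimS (precomp D (rS D fY) p \<mu>)"
    then have k: "k < p" by simp
    have kk: "\<sigma> k \<le> \<sigma> (Suc k)" "\<sigma> (Suc k) \<le> qX" using \<sigma>1 \<sigma>2 k by auto
    have kk2: "\<xi> (\<sigma> k) \<le> \<xi> (\<sigma> (Suc k))" "\<xi> (\<sigma> (Suc k)) \<le> qY" using \<xi>1 \<xi>2 kk by auto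
    have "snd (precomp D (rS D fY) p \<mu>) ! k = chain_comp D (rS D fY) (alphaS D fY (\<xi> (\<sigma> k))) (alphaS D fY (\<xi> (\<sigma> (Suc k))))"
      using k by (simp add: precomp_nth \<mu>_def)
    also have "\<dots> = chain_comp D fY (\<xi> (\<sigma> k)) (\<xi> (\<sigma> (Suc k)))"
      using chain_comp_rS[OF D sfY kk2(1)] kk2 dfY by simp
    also have "\<dots> = chain_comp D fX (\<sigma> k) (\<sigma> (Suc k))"
      using chain_comp_precomp[OF D sfY o1' kk] eqX by simp
    also have "\<dots> = chain_comp D (rS D fX) k (Suc k)"
      using chain_comp_rS[OF D sfX kk(1)] kk dfX \<sigma>3[of k] \<sigma>3[of "Suc k"] k by simp
    also have "\<dots> = snd (precomp D (rS D fX) p id) ! k" using precomp_nth[OF k, of D "rS D fX" id] by simp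
    also have "\<dots> = snd (rS D fX) ! k"
      using precomp_id[OF D rS_simplex[OF D sfX]] p_def by simp
    finally show "snd (precomp D (rS D fY) p \<mu>) ! k = snd (rS D fX) ! k" .
  qed
  have dmD: "dmor D (Sd_rep D Fo Fa \<psi>)"
    unfolding SR dmor_def srcM_def tgtM_def mapM_def
    using rS_simplex[OF D sfX] rS_simplex[OF D sfY] om pre p_def by simp
  have pp: "\<sigma> p \<le> qX" "\<xi> (\<sigma> p) \<le> \<xi> qX" "\<xi> qX \<le> qY" "\<xi> (\<sigma> p) \<le> qY"
    using \<sigma>1 \<xi>1 \<xi>2 by auto
  have "eps_rep D (Sd_rep D Fo Fa \<psi>) = chain_comp D (rS D fY) (alphaS D fY (\<xi> (\<sigma> p))) (alphaS D fY qY)"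
    unfolding SR eps_rep_def srcM_def tgtM_def mapM_def using dY p_def by (simp add: \<mu>_def)
  also have "\<dots> = chain_comp D fY (\<xi> (\<sigma> p)) qY" using chain_comp_rS[OF D sfY pp(4)] dfY by simp
  also have "\<dots> = Comp D (chain_comp D fY (\<xi> qX) qY) (chain_comp D fY (\<xi> (\<sigma> p)) (\<xi> qX))"
    using chain_comp_split[OF D sfY pp(2,3)] dfY by simp
  also have "chain_comp D fY (\<xi> (\<sigma> p)) (\<xi> qX) = chain_comp D fX (\<sigma> p) qX"
    using chain_comp_precomp[OF D sfY o1' pp(1)] eqX by simp
  also have "\<dots> = chain_comp D (rS D fX) p p"
    using chain_comp_rS[OF D sfX pp(1)] dfX \<sigma>3[of p] pX by simp
  also have "\<dots> = Id D (objS D fY (\<xi> qX))"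
    using objS_rS[OF D sfX, of qX] dfX pX objS_precomp[OF D sfY o1', of qX] eqX by (simp add: chain_comp_refl)
  also have "Comp D (chain_comp D fY (\<xi> qX) qY) (Id D (objS D fY (\<xi> qX))) = chain_comp D fY (\<xi> qX) qY"
    using chain_comp_arr[OF D sfY pp(3)] dfY catD(9)[OF D, of "chain_comp D fY (\<xi> qX) qY"] by simp
  also have "\<dots> = Fa (eps_rep C \<psi>)"
    using Fa_chain_comp[OF C F sY, of "\<xi> qX" qY] pp(3) unfolding eps_rep_def fY_def qX_def qY_def X_def Y_def \<xi>_def
    by simp
  finally show ?thesis using dmD by simp
qed


theorem lemma26:
  fixes C :: "('o,'a) cat" and D :: "('p,'b) cat"
    and Fo :: "'o \<Rightarrow> 'p" and Fa :: "'a \<Rightarrow> 'b"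
  assumes "category C" and "category D" and "functor C D Fo Fa"
  shows "(\<forall>X. nondeg C X \<longrightarrow> Fo (eps_obj C X) = eps_obj D (Sd_obj D Fo Fa X)) \<and>
         (\<forall>c\<in>Sd_arrs C. Fa (eps_arr C c) = eps_arr D (Sd_arr C D Fo Fa c))"
proof (intro conjI allI impI ballI)
  fix X assume "nondeg C X"
  then have sX: "simplex C X" by (simp add: nondeg_def)
  have sf: "simplex D (fS Fo Fa X)" using fS_simplex[OF assms(3) sX] .
  have "eps_obj D (Sd_obj D Fo Fa X) = objS D (rS D (fS Fo Fa X)) (alphaS D (fS Fo Fa X) (dimS X))"
    unfolding eps_obj_def Sd_obj_def using dimS_rS[of D "fS Fo Fa X"] by simp
  also have "\<dots> = objS D (fS Fo Fa X) (dimS X)" using objS_rS[OF assms(2) sf, of "dimS X"] by simp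
  also have "\<dots> = Fo (eps_obj C X)" using objS_fS[OF assms(3) sX, of "dimS X"] by (simp add: eps_obj_def)
  finally show "Fo (eps_obj C X) = eps_obj D (Sd_obj D Fo Fa X)" by simp
next
  fix c assume "c \<in> Sd_arrs C"
  then obtain \<phi> where c: "c = mclass C \<phi>" and d\<phi>: "dmor C \<phi>" unfolding Sd_arrs_def by auto
  define \<psi> where "\<psi> = (SOME \<psi>. \<psi> \<in> c)"
  have "\<phi> \<in> c" using c d\<phi> by (simp add: mclass_def msim.refl)
  then have "\<psi> \<in> c" unfolding \<psi>_def by (rule someI)
  then have "msim C \<phi> \<psi>" using c by (simp add: mclass_def)
  then have d\<psi>: "dmor C \<psi>" using msim_inv[OF _ assms(1)] by blast
  have e1: "eps_arr C c = eps_rep C \<psi>" unfolding eps_arr_def \<psi>_def ..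
  define \<rho>0 where "\<rho>0 = Sd_rep D Fo Fa \<psi>"
  have m: "dmor D \<rho>0 \<and> Fa (eps_rep C \<psi>) = eps_rep D \<rho>0" using Sd_main[OF assms d\<psi>] \<rho>0_def by simp
  have sa: "Sd_arr C D Fo Fa c = mclass D \<rho>0" unfolding Sd_arr_def \<rho>0_def \<psi>_def ..
  define \<rho> where "\<rho> = (SOME \<rho>. \<rho> \<in> mclass D \<rho>0)"
  have "\<rho>0 \<in> mclass D \<rho>0" using m by (simp add: mclass_def msim.refl)
  then have "\<rho> \<in> mclass D \<rho>0" unfolding \<rho>_def by (rule someI)
  then have "msim D \<rho>0 \<rho>" by (simp add: mclass_def)
  then have "eps_rep D \<rho>0 = eps_rep D \<rho>" using msim_inv[OF _ assms(2)] by blast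
  moreover have "eps_arr D (Sd_arr C D Fo Fa c) = eps_rep D \<rho>" unfolding sa eps_arr_def \<rho>_def ..
  ultimately show "Fa (eps_arr C c) = eps_arr D (Sd_arr C D Fo Fa c)" using e1 m by simp
qed

end
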